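(* Let $q\ge 2$. The class of rational subsets of $\mathrm{BS}(1,q)$ is not closed under intersection: there exist rational subsets $R_1,R_2\subseteq\mathrm{BS}(1,q)$ such that $R_1\cap R_2$ is not rational.
   Context: $\mathrm{BS}(1,q)$ is identified with $\mathbb{Z}[\tfrac1q]\rtimes\mathbb{Z}$ with $(r,m)(r',m')=(r+q^m r',m+m')$ and generators $a=(1,0)$, $t=(0,1)$. A subset is rational if it is accepted by a finite automaton whose edges are labelled by $a^{\pm1},t^{\pm1}$, i.e. it is the set of products of edge labels along runs from an initial to a final state. *)

theory Defs
  imports Complex_Main
begin

text \<open>BS(1,q) realised as Z[1/q] \<rtimes> Z, with Z[1/q] a subring of the rationals.
  An element is a pair (r, m) with r :: rat in Z[1/q] and m :: int.\<close>

definition Zq :: "int \<Rightarrow> rat set" where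
  "Zq q = {r. \<exists>k::nat. r * of_int q ^ k \<in> \<int>}"

definition BS_carrier :: "int \<Rightarrow> (rat \<times> int) set" where
  "BS_carrier q = Zq q \<times> UNIV"

definition bs_mult :: "int \<Rightarrow> rat \<times> int \<Rightarrow> rat \<times> int \<Rightarrow> rat \<times> int" where
  "bs_mult q x y = (fst x + (of_int q) powi (snd x) * fst y, snd x + snd y)"

datatype gen = GA | GAinv | GT | GTinv

fun gen_val :: "gen \<Rightarrow> rat \<times> int" where
  "gen_val GA = (1, 0)"
| "gen_val GAinv = (-1, 0)"
| "gen_val GT = (0, 1)"
| "gen_val GTinv = (0, -1)"

fun word_eval :: "int \<Rightarrow> gen list \<Rightarrow> rat \<times> int" where
  "word_eval q [] = (0, 0)"
| "word_eval q (x # w) = bs_mult q (gen_val x) (word_eval q w)"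

inductive run :: "(nat \<times> gen \<times> nat) set \<Rightarrow> nat \<Rightarrow> gen list \<Rightarrow> nat \<Rightarrow> bool"
  for delta where
  run_nil: "run delta p [] p"
| run_cons: "(p, x, p') \<in> delta \<Longrightarrow> run delta p' w p'' \<Longrightarrow> run delta p (x # w) p''"

definition rational_subset :: "int \<Rightarrow> (rat \<times> int) set \<Rightarrow> bool" where
  "rational_subset q R \<longleftrightarrow>
     (\<exists>delta I F. finite delta \<and> finite I \<and> finite F \<and>
        R = {word_eval q w | w. \<exists>i\<in>I. \<exists>f\<in>F. run delta i w f})"

end

theory Submission
  imports Defs
begin

lemma bs_assoc:
  assumes "q \<noteq> 0"
  shows "bs_mult q x (bs_mult q y z) = bs_mult q (bs_mult q x y) z"
  using assms by (simp add: bs_mult_def power_int_add algebra_simps)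

lemma word_eval_append:
  assumes "q \<noteq> 0"
  shows "word_eval q (u @ w) = bs_mult q (word_eval q u) (word_eval q w)"
proof (induction u)
  case Nil
  then show ?case by (simp add: bs_mult_def)
next
  case (Cons x u)
  then show ?case using bs_assoc[OF assms] by simp
qed

lemma run_append:
  "run delta p u s \<Longrightarrow> run delta s w r \<Longrightarrow> run delta p (u @ w) r"
  by (induction rule: run.induct) (auto intro: run.intros)

lemma run_loop_aux:
  assumes "run delta p w p'"
  shows "(\<exists>u v x s. w = u @ v @ x \<and> v \<noteq> [] \<and> run delta p u s \<and> run delta s v s \<and> run delta s x p')
    \<or> (\<exists>V. V \<subseteq> fst ` delta \<and> finite V \<and> card V = length w \<and>
        (\<forall>s\<in>V. \<exists>u x. w = u @ x \<and> run delta p u s \<and> run delta s x p'))"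
  using assms
proof (induction rule: run.induct)
  case (run_nil p)
  then show ?case by auto
next
  case (run_cons p x p1 w p2)
  from run_cons.IH show ?case
  proof
    assume "\<exists>u v x s. w = u @ v @ x \<and> v \<noteq> [] \<and> run delta p1 u s \<and> run delta s v s \<and> run delta s x p2"
    then obtain u v y s where h: "w = u @ v @ y" "v \<noteq> []" "run delta p1 u s" "run delta s v s" "run delta s y p2"
      by blast
    have "run delta p (x # u) s" using run_cons.hyps(1) h(3) by (rule run.run_cons)
    then show ?thesis using h by (intro disjI1 exI[of _ "x # u"] exI[of _ v] exI[of _ y] exI[of _ s]) auto
  next
    assume "\<exists>V. V \<subseteq> fst ` delta \<and> finite V \<and> card V = length w \<and>
        (\<forall>s\<in>V. \<exists>u x. w = u @ x \<and> run delta p1 u s \<and> run delta s x p2)"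
    then obtain V where V: "V \<subseteq> fst ` delta" "finite V" "card V = length w"
      "\<forall>s\<in>V. \<exists>u x. w = u @ x \<and> run delta p1 u s \<and> run delta s x p2" by blast
    show ?thesis
    proof (cases "p \<in> V")
      case True
      then obtain u y where h: "w = u @ y" "run delta p1 u p" "run delta p y p2" using V(4) by blast
      have "run delta p (x # u) p" using run_cons.hyps(1) h(2) by (rule run.run_cons)
      then show ?thesis using h run.run_nil[of delta p]
        by (intro disjI1 exI[of _ "[]"] exI[of _ "x # u"] exI[of _ y] exI[of _ p]) auto
    next
      case False
      have pin: "p \<in> fst ` delta" using run_cons.hyps(1) by force
      have "\<forall>s\<in>insert p V. \<exists>u y. x # w = u @ y \<and> run delta p u s \<and> run delta s y p2"
      proof
        fix s assume "s \<in> insert p V"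
        then show "\<exists>u y. x # w = u @ y \<and> run delta p u s \<and> run delta s y p2"
        proof
          assume "s = p"
          then show ?thesis using run.run_nil[of delta p] run.run_cons[OF run_cons.hyps] by auto
        next
          assume "s \<in> V"
          then obtain u y where h: "w = u @ y" "run delta p1 u s" "run delta s y p2" using V(4) by blast
          have "run delta p (x # u) s" using run_cons.hyps(1) h(2) by (rule run.run_cons)
          then show ?thesis using h by (intro exI[of _ "x # u"] exI[of _ y]) auto
        qed
      qed
      then show ?thesis using V False pin
        by (intro disjI2 exI[of _ "insert p V"]) auto
    qed
  qed
qed

lemma run_loop:
  assumes "run delta p w p'" "finite delta" "length w > card (fst ` delta)"
  shows "\<exists>u v x s. w = u @ v @ x \<and> v \<noteq> [] \<and> run delta p u s \<and> run delta s v s \<and> run delta s x p'"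
proof -
  have "\<not> (\<exists>V. V \<subseteq> fst ` delta \<and> finite V \<and> card V = length w)"
  proof
    assume "\<exists>V. V \<subseteq> fst ` delta \<and> finite V \<and> card V = length w"
    then obtain V where "V \<subseteq> fst ` delta" "card V = length w" by blast
    then have "length w \<le> card (fst ` delta)" using card_mono[OF finite_imageI[OF assms(2)]] by metis
    then show False using assms(3) by simp
  qed
  then show ?thesis using run_loop_aux[OF assms(1)] by blast
qed

definition Sset :: "int \<Rightarrow> (rat \<times> int) set" where
  "Sset q = {(of_int q ^ n, 0) | n. True}"

lemma pow_gap:
  fixes Q :: rat
  assumes "Q \<ge> 2" "Q ^ a < Q ^ b"
  shows "Q * Q ^ a \<le> Q ^ b"
proof -
  have "a < b" using assms power_strict_increasing_iff[of Q a b] by simp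
  then have "Q ^ b = Q ^ (b - a) * Q ^ a" by (simp add: power_add[symmetric])
  moreover have "Q ^ 1 \<le> Q ^ (b - a)" using \<open>a < b\<close> assms(1) by (intro power_increasing) auto
  moreover have "Q ^ a > 0" using assms(1) by simp
  ultimately show ?thesis by (simp add: mult_right_mono)
qed

lemma no_prog:
  fixes Q :: rat and x b :: rat
  assumes "Q \<ge> 2" "Q ^ a1 = x" "Q ^ a2 = x + b" "Q ^ a3 = x + 2 * b"
  shows "b = 0"
proof (rule ccontr)
  assume nz: "b \<noteq> 0"
  have p1: "Q ^ a1 > 0" "Q ^ a2 > 0" "Q ^ a3 > 0" using assms(1) by auto
  have m: "\<And>z::rat. z > 0 \<Longrightarrow> Q * z \<ge> 2 * z" using assms(1) by (simp add: mult_right_mono)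
  show False
  proof (cases "b > 0")
    case True
    have "Q * Q ^ a1 \<le> Q ^ a2" using True assms by (intro pow_gap) auto
    have "Q * Q ^ a2 \<le> Q ^ a3" using True assms by (intro pow_gap) auto
    then show False using m[OF p1(2)] assms True p1 by linarith
  next
    case False
    then have b: "b < 0" using nz by simp
    have "Q * Q ^ a3 \<le> Q ^ a2" using b assms by (intro pow_gap) auto
    moreover have "Q * Q ^ a2 \<le> Q ^ a1" using b assms by (intro pow_gap) auto
    ultimately show False using m[OF p1(2)] m[OF p1(3)] assms b p1 by linarith
  qed
qed

lemma prog_collapse:
  assumes q: "q \<ge> 2"
    and h1: "bs_mult q g h \<in> Sset q"
    and h2: "bs_mult q g (bs_mult q y h) \<in> Sset q"
    and h3: "bs_mult q g (bs_mult q y (bs_mult q y h)) \<in> Sset q"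
  shows "bs_mult q g (bs_mult q y h) = bs_mult q g h"
proof -
  obtain g1 g2 y1 y2 h1' h2' where gs: "g = (g1, g2)" "y = (y1, y2)" "h = (h1', h2')"
    by (cases g, cases y, cases h) auto
  define Q :: rat where "Q = of_int q"
  have Q2: "Q \<ge> 2" using q unfolding Q_def by simp
  obtain a1 where A1: "g1 + Q powi g2 * h1' = Q ^ a1" "g2 + h2' = 0"
    using h1 unfolding Sset_def bs_mult_def gs Q_def by auto
  obtain a2 where A2: "g1 + Q powi g2 * (y1 + Q powi y2 * h1') = Q ^ a2" "g2 + (y2 + h2') = 0"
    using h2 unfolding Sset_def bs_mult_def gs Q_def by auto
  have y2: "y2 = 0" using A1(2) A2(2) by simp
  obtain a3 where A3: "g1 + Q powi g2 * (y1 + Q powi y2 * (y1 + Q powi y2 * h1')) = Q ^ a3"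
    using h3 unfolding Sset_def bs_mult_def gs Q_def by auto
  define x where "x = g1 + Q powi g2 * h1'"
  define b where "b = Q powi g2 * y1"
  have "Q ^ a1 = x" using A1 x_def by simp
  moreover have "Q ^ a2 = x + b" using A2 y2 unfolding x_def b_def by (simp add: algebra_simps)
  moreover have "Q ^ a3 = x + 2 * b" using A3 y2 unfolding x_def b_def by (simp add: algebra_simps)
  ultimately have "b = 0" using no_prog[OF Q2] by blast
  then show ?thesis using y2 unfolding gs bs_mult_def b_def Q_def by (simp add: algebra_simps)
qed

lemma finite_gen: "finite (UNIV :: gen set)"
proof -
  have "UNIV = {GA, GAinv, GT, GTinv}" by (auto intro: gen.exhaust)
  then show ?thesis by (metis finite.emptyI finite_insert)
qed

lemma Sset_not_rational:
  assumes q: "q \<ge> 2"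
  shows "\<not> rational_subset q (Sset q)"
proof
  assume "rational_subset q (Sset q)"
  then obtain delta I F where fin: "finite delta"
    and S: "Sset q = {word_eval q w | w. \<exists>i\<in>I. \<exists>f\<in>F. run delta i w f}"
    unfolding rational_subset_def by blast
  define N where "N = card (fst ` delta)"
  have qn0: "q \<noteq> 0" using q by simp
  have key: "\<forall>w. (\<exists>i\<in>I. \<exists>f\<in>F. run delta i w f) \<longrightarrow>
     (\<exists>w'. length w' \<le> N \<and> (\<exists>i\<in>I. \<exists>f\<in>F. run delta i w' f) \<and> word_eval q w' = word_eval q w)"
  proof (intro allI)
    fix w
    show "(\<exists>i\<in>I. \<exists>f\<in>F. run delta i w f) \<longrightarrow>
     (\<exists>w'. length w' \<le> N \<and> (\<exists>i\<in>I. \<exists>f\<in>F. run delta i w' f) \<and> word_eval q w' = word_eval q w)"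
    proof (induction "length w" arbitrary: w rule: less_induct)
      case less
      show ?case
      proof
        assume "\<exists>i\<in>I. \<exists>f\<in>F. run delta i w f"
        then obtain i f where i: "i \<in> I" "f \<in> F" "run delta i w f" by blast
        show "\<exists>w'. length w' \<le> N \<and> (\<exists>i\<in>I. \<exists>f\<in>F. run delta i w' f) \<and> word_eval q w' = word_eval q w"
        proof (cases "length w \<le> N")
          case True
          then show ?thesis using i by blast
        next
          case False
          then obtain u v x s where d: "w = u @ v @ x" "v \<noteq> []" "run delta i u s"
            "run delta s v s" "run delta s x f"
            using run_loop[OF i(3) fin] N_def by fastforce
          have r1: "run delta i (u @ x) f" using d run_append by blast
          have r2: "run delta i (u @ v @ x) f" using d run_append by blast
          have r3: "run delta i (u @ v @ v @ x) f" using d run_append by blast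
          have e1: "bs_mult q (word_eval q u) (word_eval q x) \<in> Sset q"
            using r1 i unfolding S by (force simp: word_eval_append[OF qn0])
          have e2: "bs_mult q (word_eval q u) (bs_mult q (word_eval q v) (word_eval q x)) \<in> Sset q"
            using r2 i unfolding S by (force simp: word_eval_append[OF qn0] simp del: append_assoc)
          have e3: "bs_mult q (word_eval q u) (bs_mult q (word_eval q v)
                (bs_mult q (word_eval q v) (word_eval q x))) \<in> Sset q"
            using r3 i unfolding S by (force simp: word_eval_append[OF qn0] simp del: append_assoc)
          have eq: "word_eval q (u @ x) = word_eval q w"
            using prog_collapse[OF q e1 e2 e3] d(1) word_eval_append[OF qn0] by simp
          have "length (u @ x) < length w" using d by simp
          then have "\<exists>w'. length w' \<le> N \<and> (\<exists>i\<in>I. \<exists>f\<in>F. run delta i w' f) \<and> word_eval q w' = word_eval q (u @ x)"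
            using less r1 i by blast
          then show ?thesis using eq by simp
        qed
      qed
    qed
  qed
  have "Sset q \<subseteq> word_eval q ` {w. set w \<subseteq> UNIV \<and> length w \<le> N}"
  proof
    fix z assume "z \<in> Sset q"
    then obtain w where "z = word_eval q w" "\<exists>i\<in>I. \<exists>f\<in>F. run delta i w f" using S by blast
    then obtain w' where "length w' \<le> N" "word_eval q w' = z" using key by metis
    then show "z \<in> word_eval q ` {w. set w \<subseteq> UNIV \<and> length w \<le> N}" by blast
  qed
  then have finS: "finite (Sset q)"
    using finite_lists_length_le[OF finite_gen] finite_subset by blast
  have "inj (\<lambda>n::nat. ((of_int q :: rat) ^ n, 0::int))"
  proof (rule injI)
    fix m n :: nat
    assume "((of_int q :: rat) ^ m, 0::int) = (of_int q ^ n, 0)"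
    then have "(of_int q :: rat) ^ m = of_int q ^ n" by simp
    then show "m = n" using q power_inject_exp[of "of_int q :: rat" m n] by simp
  qed
  moreover have "Sset q = range (\<lambda>n::nat. ((of_int q :: rat) ^ n, 0::int))"
    unfolding Sset_def by auto
  ultimately have "infinite (Sset q)" using finite_imageD by fastforce
  then show False using finS by simp
qed


definition d1 :: "(nat \<times> gen \<times> nat) set" where
  "d1 = {(0, GT, 0), (0, GA, 1), (1, GTinv, 1)}"

definition d2 :: "(nat \<times> gen \<times> nat) set" where
  "d2 = {(0, GA, 0)}"

lemma L1:
  assumes "run d1 p w p'" "q \<noteq> 0"
  shows "p' = 1 \<Longrightarrow> (p = 1 \<longrightarrow> word_eval q w = (0, - int (length w))) \<and>
     (p = 0 \<longrightarrow> (\<exists>n m::nat. word_eval q w = (of_int q ^ n, int n - int m)))"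
  using assms(1)
proof (induction rule: run.induct)
  case (run_nil p)
  then show ?case by simp
next
  case (run_cons p x p1 w p2)
  from run_cons.hyps(1) have "(p, x, p1) = (0, GT, 0) \<or> (p, x, p1) = (0, GA, 1) \<or> (p, x, p1) = (1, GTinv, 1)"
    unfolding d1_def by auto
  then show ?case
  proof (elim disjE)
    assume h: "(p, x, p1) = (0, GT, 0)"
    then obtain n m :: nat where e: "word_eval q w = (of_int q ^ n, int n - int m)" using run_cons by auto
    have "word_eval q (x # w) = (of_int q ^ Suc n, int (Suc n) - int m)"
      using h e by (simp add: bs_mult_def)
    then have "\<exists>n m::nat. word_eval q (x # w) = (of_int q ^ n, int n - int m)" by blast
    then show ?thesis using h by simp
  next
    assume h: "(p, x, p1) = (0, GA, 1)"
    then have e: "word_eval q w = (0, - int (length w))" using run_cons by auto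
    have "word_eval q (x # w) = (of_int q ^ 0, int 0 - int (length w))"
      using h e by (simp add: bs_mult_def)
    then have "\<exists>n m::nat. word_eval q (x # w) = (of_int q ^ n, int n - int m)" by blast
    then show ?thesis using h by simp
  next
    assume h: "(p, x, p1) = (1, GTinv, 1)"
    then have e: "word_eval q w = (0, - int (length w))" using run_cons by auto
    show ?thesis using h e by (simp add: bs_mult_def)
  qed
qed

lemma L2:
  assumes "run d2 p w p'"
  shows "word_eval q w = (of_nat (length w), 0)"
  using assms
proof (induction rule: run.induct)
  case (run_nil p)
  then show ?case by simp
next
  case (run_cons p x p1 w p2)
  then have "x = GA" unfolding d2_def by auto
  then show ?case using run_cons by (simp add: bs_mult_def)
qed

lemma run_GT: "run d1 0 (replicate n GT) 0"
  by (induction n) (auto intro: run.intros simp: d1_def)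

lemma run_GTinv: "run d1 1 (replicate n GTinv) 1"
  by (induction n) (auto intro: run.intros simp: d1_def)

lemma run_GA: "run d2 0 (replicate n GA) 0"
  by (induction n) (auto intro: run.intros simp: d2_def)

lemma eval_GT: "word_eval q (replicate n GT @ w) = (of_int q ^ n * fst (word_eval q w), int n + snd (word_eval q w))"
  by (induction n) (auto simp: bs_mult_def algebra_simps)

lemma eval_GTinv: "word_eval q (replicate n GTinv) = (0, - int n)"
  by (induction n) (auto simp: bs_mult_def algebra_simps)

theorem mainTheorem4:
  fixes q :: int
  assumes "q \<ge> 2"
  shows "\<exists>R1 R2. R1 \<subseteq> BS_carrier q \<and> R2 \<subseteq> BS_carrier q \<and>
           rational_subset q R1 \<and> rational_subset q R2 \<and>
           \<not> rational_subset q (R1 \<inter> R2)"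
proof -
  have qn0: "q \<noteq> 0" using assms by simp
  define R1 where "R1 = {word_eval q w | w. \<exists>i\<in>{0::nat}. \<exists>f\<in>{1}. run d1 i w f}"
  define R2 where "R2 = {word_eval q w | w. \<exists>i\<in>{0::nat}. \<exists>f\<in>{0}. run d2 i w f}"
  have rat1: "rational_subset q R1" unfolding rational_subset_def R1_def
    by (intro exI[of _ d1] exI[of _ "{0::nat}"] exI[of _ "{1::nat}"]) (auto simp: d1_def)
  have rat2: "rational_subset q R2" unfolding rational_subset_def R2_def
    by (intro exI[of _ d2] exI[of _ "{0::nat}"] exI[of _ "{0::nat}"]) (auto simp: d2_def)
  have R1c: "\<And>z. z \<in> R1 \<Longrightarrow> \<exists>n m::nat. z = (of_int q ^ n, int n - int m)"
    unfolding R1_def using L1[OF _ qn0] by blast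
  have R2c: "\<And>z. z \<in> R2 \<Longrightarrow> \<exists>k::nat. z = (of_nat k, 0)"
    unfolding R2_def using L2 by blast
  have sub1: "R1 \<subseteq> BS_carrier q"
  proof
    fix z assume "z \<in> R1"
    then obtain n m :: nat where z: "z = (of_int q ^ n, int n - int m)" using R1c by blast
    have "(of_int q :: rat) ^ n * of_int q ^ 0 \<in> \<int>" by simp
    then show "z \<in> BS_carrier q" unfolding z BS_carrier_def Zq_def by blast
  qed
  have sub2: "R2 \<subseteq> BS_carrier q"
  proof
    fix z assume "z \<in> R2"
    then obtain k :: nat where z: "z = (of_nat k, 0)" using R2c by blast
    have "(of_nat k :: rat) * of_int q ^ 0 \<in> \<int>" by simp
    then show "z \<in> BS_carrier q" unfolding z BS_carrier_def Zq_def by blast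
  qed
  have "R1 \<inter> R2 = Sset q"
  proof
    show "R1 \<inter> R2 \<subseteq> Sset q"
    proof
      fix z assume z: "z \<in> R1 \<inter> R2"
      then obtain n m :: nat where z1: "z = (of_int q ^ n, int n - int m)" using R1c by blast
      obtain k :: nat where "z = (of_nat k, 0)" using R2c z by blast
      then have "z = (of_int q ^ n, 0)" using z1 by simp
      then show "z \<in> Sset q" unfolding Sset_def by blast
    qed
  next
    show "Sset q \<subseteq> R1 \<inter> R2"
    proof
      fix z assume "z \<in> Sset q"
      then obtain n :: nat where z: "z = (of_int q ^ n, 0)" unfolding Sset_def by blast
      define w where "w = replicate n GT @ [GA] @ replicate n GTinv"
      have "(0::nat, GA, 1::nat) \<in> d1" by (simp add: d1_def)
      then have "run d1 0 ([GA] @ replicate n GTinv) 1" using run.run_cons[OF _ run_GTinv] by simp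
      then have "run d1 0 w 1" unfolding w_def by (rule run_append[OF run_GT])
      moreover have "word_eval q w = z" unfolding w_def z using eval_GT[of q n "[GA] @ replicate n GTinv"]
        by (simp add: eval_GTinv bs_mult_def)
      ultimately have "z \<in> R1" unfolding R1_def by blast
      moreover have "z \<in> R2"
      proof -
        have "word_eval q (replicate (nat (q ^ n)) GA) = (of_nat (nat (q ^ n)), 0)"
          using L2[OF run_GA] by simp
        moreover have "(of_nat (nat (q ^ n)) :: rat) = of_int q ^ n"
          using assms by (simp add: of_nat_nat)
        ultimately have "word_eval q (replicate (nat (q ^ n)) GA) = z" unfolding z by simp
        then show ?thesis unfolding R2_def using run_GA[of "nat (q ^ n)"] by blast
      qed
      ultimately show "z \<in> R1 \<inter> R2" by blast
    qed
  qed
  then show ?thesis using sub1 sub2 rat1 rat2 Sset_not_rational[OF assms] by metis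
qed

end
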